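(* The identity functor of $\mathrm{Gaunt}_n$ has exactly one natural endo-transformation, namely the identity transformation: if $\eta\colon\mathrm{id}\Rightarrow\mathrm{id}$ is a natural transformation of endofunctors of $\mathrm{Gaunt}_n$, then $\eta_X=\mathrm{id}_X$ for every gaunt $n$-category $X$.
   Context: A strict $0$-category is a set; a strict $n$-category is a category enriched in strict $(n-1)$-categories. A strict $n$-category is gaunt if for every $1\le k\le n$ its only invertible $k$-morphisms are identities; $\mathrm{Gaunt}_n$ is the category of small gaunt $n$-categories and strict functors. *)

theory Defs
  imports Main
begin

text \<open>Single-sorted presentation of strict n-categories: a set of cells with
  k-source / k-target operators and partial k-composition for k < n
  (comp k g f is "g after f", defined when src k g = tgt k f).\<close>

record 'a ncat =
  Cells :: "'a set"
  src   :: "nat \<Rightarrow> 'a \<Rightarrow> 'a"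
  tgt   :: "nat \<Rightarrow> 'a \<Rightarrow> 'a"
  comp  :: "nat \<Rightarrow> 'a \<Rightarrow> 'a \<Rightarrow> 'a"

definition strict_ncat :: "nat \<Rightarrow> 'a ncat \<Rightarrow> bool" where
  "strict_ncat n C \<longleftrightarrow>
     (\<forall>k<n. \<forall>x\<in>Cells C. src C k x \<in> Cells C \<and> tgt C k x \<in> Cells C) \<and>
     (\<forall>k<n. \<forall>x\<in>Cells C. \<forall>y\<in>Cells C. src C k x = tgt C k y \<longrightarrow> comp C k x y \<in> Cells C) \<and>
     (\<forall>j<n. \<forall>k<n. \<forall>x\<in>Cells C.
        (k < j \<longrightarrow> src C k (src C j x) = src C k x \<and> src C k (tgt C j x) = src C k x \<and>
                    tgt C k (src C j x) = tgt C k x \<and> tgt C k (tgt C j x) = tgt C k x) \<and>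
        (j \<le> k \<longrightarrow> src C k (src C j x) = src C j x \<and> src C k (tgt C j x) = tgt C j x \<and>
                    tgt C k (src C j x) = src C j x \<and> tgt C k (tgt C j x) = tgt C j x)) \<and>
     (\<forall>k<n. \<forall>x\<in>Cells C. \<forall>y\<in>Cells C. src C k x = tgt C k y \<longrightarrow>
        src C k (comp C k x y) = src C k y \<and> tgt C k (comp C k x y) = tgt C k x) \<and>
     (\<forall>j<n. \<forall>k<n. \<forall>x\<in>Cells C. \<forall>y\<in>Cells C. src C k x = tgt C k y \<longrightarrow>
        (k < j \<longrightarrow> src C j (comp C k x y) = comp C k (src C j x) (src C j y) \<and>
                    tgt C j (comp C k x y) = comp C k (tgt C j x) (tgt C j y)) \<and>
        (j < k \<longrightarrow> src C j (comp C k x y) = src C j x \<and> tgt C j (comp C k x y) = tgt C j x)) \<and>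
     (\<forall>k<n. \<forall>x\<in>Cells C. comp C k (tgt C k x) x = x \<and> comp C k x (src C k x) = x) \<and>
     (\<forall>k<n. \<forall>x\<in>Cells C. \<forall>y\<in>Cells C. \<forall>z\<in>Cells C.
        src C k x = tgt C k y \<longrightarrow> src C k y = tgt C k z \<longrightarrow>
        comp C k (comp C k x y) z = comp C k x (comp C k y z)) \<and>
     (\<forall>j<n. \<forall>k<n. \<forall>x\<in>Cells C. \<forall>y\<in>Cells C. \<forall>z\<in>Cells C. \<forall>w\<in>Cells C.
        j < k \<longrightarrow> src C k x = tgt C k y \<longrightarrow> src C k z = tgt C k w \<longrightarrow> src C j x = tgt C j z \<longrightarrow>
        comp C j (comp C k x y) (comp C k z w) = comp C k (comp C j x z) (comp C j y w))"

text \<open>x is an m-morphism (a cell of dimension at most m); every cell is an n-morphism.\<close>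
definition is_morphism :: "nat \<Rightarrow> 'a ncat \<Rightarrow> nat \<Rightarrow> 'a \<Rightarrow> bool" where
  "is_morphism n C m x \<longleftrightarrow> x \<in> Cells C \<and> (n \<le> m \<or> src C m x = x)"

definition invertible_morphism :: "nat \<Rightarrow> 'a ncat \<Rightarrow> nat \<Rightarrow> 'a \<Rightarrow> bool" where
  "invertible_morphism n C k x \<longleftrightarrow> is_morphism n C (Suc k) x \<and>
     (\<exists>y. is_morphism n C (Suc k) y \<and> src C k y = tgt C k x \<and> tgt C k y = src C k x \<and>
          comp C k y x = src C k x \<and> comp C k x y = tgt C k x)"

definition gaunt :: "nat \<Rightarrow> 'a ncat \<Rightarrow> bool" where
  "gaunt n C \<longleftrightarrow> strict_ncat n C \<and>
     (\<forall>k<n. \<forall>x. invertible_morphism n C k x \<longrightarrow> x = src C k x)"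

definition strict_functor :: "nat \<Rightarrow> 'a ncat \<Rightarrow> 'a ncat \<Rightarrow> ('a \<Rightarrow> 'a) \<Rightarrow> bool" where
  "strict_functor n C D F \<longleftrightarrow>
     (\<forall>x\<in>Cells C. F x \<in> Cells D) \<and>
     (\<forall>k<n. \<forall>x\<in>Cells C. F (src C k x) = src D k (F x) \<and> F (tgt C k x) = tgt D k (F x)) \<and>
     (\<forall>k<n. \<forall>x\<in>Cells C. \<forall>y\<in>Cells C. src C k x = tgt C k y \<longrightarrow>
        F (comp C k x y) = comp D k (F x) (F y))"

text \<open>A natural endo-transformation of the identity functor of Gaunt_n (objects: gaunt
  n-categories whose cells lie in the universe type 'a).\<close>
definition nat_endo_id :: "nat \<Rightarrow> ('a ncat \<Rightarrow> 'a \<Rightarrow> 'a) \<Rightarrow> bool" where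
  "nat_endo_id n \<eta> \<longleftrightarrow>
     (\<forall>X. gaunt n X \<longrightarrow> strict_functor n X X (\<eta> X)) \<and>
     (\<forall>X Y F. gaunt n X \<longrightarrow> gaunt n Y \<longrightarrow> strict_functor n X Y F \<longrightarrow>
        (\<forall>x\<in>Cells X. F (\<eta> X x) = \<eta> Y (F x)))"

end

theory Submission
  imports Defs
begin

definition globe :: "(nat \<times> bool \<Rightarrow> 'a) \<Rightarrow> nat \<Rightarrow> 'a ncat" where
"globe g M = \<lparr>Cells = g ` {p. fst p < M \<or> (fst p = M \<and> \<not> snd p)},
 src = (\<lambda>k a. if k < fst (inv g a) then g (k,False) else a),
 tgt = (\<lambda>k a. if k < fst (inv g a) then g (k,True) else a),
 comp = (\<lambda>k a b. if fst (inv g a) \<le> k then b else a)\<rparr>"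

lemma globe_strict: assumes "inj g" shows "strict_ncat n (globe g M)"
  using assms unfolding strict_ncat_def globe_def
  by (auto simp: inv_f_f inj_eq)

lemma globe_gaunt: assumes "inj g" shows "gaunt n (globe g M)"
  unfolding gaunt_def
proof (intro conjI allI impI)
  show "strict_ncat n (globe g M)" by (rule globe_strict[OF assms])
  fix k x assume "k < n" "invertible_morphism n (globe g M) k x"
  then show "x = src (globe g M) k x"
    using assms unfolding invertible_morphism_def is_morphism_def globe_def
    by (auto simp: inv_f_f inj_eq split: if_splits)
qed


lemma sn_closed0: "strict_ncat n C \<Longrightarrow> \<forall>k<n. \<forall>x\<in>Cells C. src C k x \<in> Cells C \<and> tgt C k x \<in> Cells C"
  unfolding strict_ncat_def by (elim conjE) assumption
lemma sn_bnd0: "strict_ncat n C \<Longrightarrow> \<forall>j<n. \<forall>k<n. \<forall>x\<in>Cells C.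
        (k < j \<longrightarrow> src C k (src C j x) = src C k x \<and> src C k (tgt C j x) = src C k x \<and>
                    tgt C k (src C j x) = tgt C k x \<and> tgt C k (tgt C j x) = tgt C k x) \<and>
        (j \<le> k \<longrightarrow> src C k (src C j x) = src C j x \<and> src C k (tgt C j x) = tgt C j x \<and>
                    tgt C k (src C j x) = src C j x \<and> tgt C k (tgt C j x) = tgt C j x)"
  unfolding strict_ncat_def by (elim conjE) assumption
lemma sn_id0: "strict_ncat n C \<Longrightarrow> \<forall>k<n. \<forall>x\<in>Cells C. comp C k (tgt C k x) x = x \<and> comp C k x (src C k x) = x"
  unfolding strict_ncat_def by (elim conjE) assumption

lemma sn_closed: "strict_ncat n C \<Longrightarrow> k < n \<Longrightarrow> x \<in> Cells C \<Longrightarrow> src C k x \<in> Cells C \<and> tgt C k x \<in> Cells C"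
  using sn_closed0 by blast
lemma sn_lt: assumes "strict_ncat n C" "j < n" "k < j" "x \<in> Cells C" shows
  "src C k (src C j x) = src C k x \<and> src C k (tgt C j x) = src C k x \<and>
  tgt C k (src C j x) = tgt C k x \<and> tgt C k (tgt C j x) = tgt C k x"
proof -
  have "k < n" using assms by simp
  then have "(k < j \<longrightarrow> src C k (src C j x) = src C k x \<and> src C k (tgt C j x) = src C k x \<and>
                    tgt C k (src C j x) = tgt C k x \<and> tgt C k (tgt C j x) = tgt C k x)"
    using sn_bnd0[OF assms(1)] assms by blast
  then show ?thesis using assms(3) by blast
qed
lemma sn_le: assumes "strict_ncat n C" "k < n" "j \<le> k" "x \<in> Cells C" shows
  "src C k (src C j x) = src C j x \<and> src C k (tgt C j x) = tgt C j x \<and>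
  tgt C k (src C j x) = src C j x \<and> tgt C k (tgt C j x) = tgt C j x"
proof -
  have "j < n" using assms by simp
  then have "(j \<le> k \<longrightarrow> src C k (src C j x) = src C j x \<and> src C k (tgt C j x) = tgt C j x \<and>
                    tgt C k (src C j x) = src C j x \<and> tgt C k (tgt C j x) = tgt C j x)"
    using sn_bnd0[OF assms(1)] assms by blast
  then show ?thesis using assms(3) by blast
qed
lemma sn_id: "strict_ncat n C \<Longrightarrow> k < n \<Longrightarrow> x \<in> Cells C \<Longrightarrow>
  comp C k (tgt C k x) x = x \<and> comp C k x (src C k x) = x"
  using sn_id0 by blast

definition gfun :: "(nat \<times> bool \<Rightarrow> 'a) \<Rightarrow> nat \<Rightarrow> 'a ncat \<Rightarrow> 'a \<Rightarrow> 'a \<Rightarrow> 'a" where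
  "gfun g M X x a = (if fst (inv g a) = M then x
     else if snd (inv g a) then tgt X (fst (inv g a)) x else src X (fst (inv g a)) x)"

lemma gfun_functor:
  assumes g: "inj g" and X: "strict_ncat n X" and x: "x \<in> Cells X" and Mn: "M \<le> n"
    and xM: "M < n \<Longrightarrow> src X M x = x"
  shows "strict_functor n (globe g M) X (gfun g M X x)"
proof -
  let ?G = "globe g M" let ?F = "gfun g M X x"
  have cells: "Cells ?G = g ` {p. fst p < M \<or> (fst p = M \<and> \<not> snd p)}"
    by (simp add: globe_def)
  have xk: "src X k x = x" if "M \<le> k" "k < n" for k
    using sn_le[OF X that(2) that(1) x] xM that by auto
  have xk': "tgt X k x = x" if "M \<le> k" "k < n" for k
    using sn_le[OF X that(2) that(1) x] xM that by auto
  have A: "\<forall>a\<in>Cells ?G. ?F a \<in> Cells X"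
  proof
    fix a assume "a \<in> Cells ?G"
    then obtain d b where a: "a = g (d,b)" and db: "d < M \<or> (d = M \<and> \<not> b)" by (auto simp: cells)
    show "?F a \<in> Cells X"
    proof (cases "d = M")
      case True then show ?thesis using x by (simp add: a gfun_def inv_f_f[OF g])
    next
      case False then have "d < n" using db Mn by auto
      then show ?thesis using sn_closed[OF X _ x] False by (simp add: a gfun_def inv_f_f[OF g])
    qed
  qed
  have B: "\<forall>k<n. \<forall>a\<in>Cells ?G. ?F (src ?G k a) = src X k (?F a) \<and> ?F (tgt ?G k a) = tgt X k (?F a)"
  proof (intro allI impI ballI)
    fix k a assume k: "k < n" and a: "a \<in> Cells ?G"
    then obtain d b where a: "a = g (d,b)" and db: "d < M \<or> (d = M \<and> \<not> b)" by (auto simp: cells)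
    have ga: "inv g a = (d,b)" by (simp add: a inv_f_f[OF g])
    show "?F (src ?G k a) = src X k (?F a) \<and> ?F (tgt ?G k a) = tgt X k (?F a)"
    proof (cases "k < d")
      case True
      then have kM: "k \<noteq> M" using db by auto
      have sa: "src ?G k a = g (k,False)" "tgt ?G k a = g (k,True)"
        using True by (simp_all add: globe_def ga)
      have Fs: "?F (g (k,False)) = src X k x" "?F (g (k,True)) = tgt X k x"
        using kM by (simp_all add: gfun_def inv_f_f[OF g])
      show ?thesis
      proof (cases "d = M")
        case True
        then have "?F a = x" by (simp add: gfun_def ga)
        then show ?thesis using sa Fs by simp
      next
        case False
        then have dn: "d < n" using db Mn by auto
        from False have "?F a = (if b then tgt X d x else src X d x)" by (simp add: gfun_def ga)
        then show ?thesis using sa Fs sn_lt[OF X dn \<open>k < d\<close> x] by simp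
      qed
    next
      case False
      have sa: "src ?G k a = a" "tgt ?G k a = a"
        using False by (simp_all add: globe_def ga)
      show ?thesis
      proof (cases "d = M")
        case True
        then have "?F a = x" by (simp add: gfun_def ga)
        moreover have "M \<le> k" using True False by simp
        ultimately show ?thesis using sa xk[OF _ k] xk'[OF _ k] by simp
      next
        case dM: False
        then have "?F a = (if b then tgt X d x else src X d x)" by (simp add: gfun_def ga)
        then show ?thesis using sa sn_le[OF X k _ x, of d] False by simp
      qed
    qed
  qed
  have C: "\<forall>k<n. \<forall>a\<in>Cells ?G. \<forall>b\<in>Cells ?G. src ?G k a = tgt ?G k b \<longrightarrow>
        ?F (comp ?G k a b) = comp X k (?F a) (?F b)"
  proof (intro allI impI ballI)
    fix k a b assume k: "k < n" and a: "a \<in> Cells ?G" and b: "b \<in> Cells ?G"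
      and ab: "src ?G k a = tgt ?G k b"
    have Fb: "?F b \<in> Cells X" "?F a \<in> Cells X" using A a b by auto
    show "?F (comp ?G k a b) = comp X k (?F a) (?F b)"
    proof (cases "fst (inv g a) \<le> k")
      case True
      then have "src ?G k a = a" by (simp add: globe_def)
      then have "?F a = tgt X k (?F b)" using ab B k b by metis
      then show ?thesis using True sn_id[OF X k Fb(1)] by (simp add: globe_def)
    next
      case False
      obtain d c where a': "a = g (d,c)" using a by (auto simp: cells)
      obtain d' c' where b': "b = g (d',c')" using b by (auto simp: cells)
      have "\<not> k < d'" using ab False by (auto simp: globe_def a' b' inv_f_f[OF g] inj_eq[OF g] split: if_splits)
      then have "tgt ?G k b = b" by (simp add: globe_def b' inv_f_f[OF g])
      then have "?F b = src X k (?F a)" using ab B k a by metis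
      then show ?thesis using False sn_id[OF X k Fb(2)] by (simp add: globe_def)
    qed
  qed
  show ?thesis unfolding strict_functor_def using A B C by blast
qed


theorem lemma4p1:
  fixes n :: nat and \<eta> :: "'a ncat \<Rightarrow> 'a \<Rightarrow> 'a"
  assumes "infinite (UNIV :: 'a set)"
    and "nat_endo_id n \<eta>"
  shows "\<forall>X. gaunt n X \<longrightarrow> (\<forall>x\<in>Cells X. \<eta> X x = x)"
proof -
  obtain f :: "nat \<Rightarrow> 'a" where f: "inj f"
    using infinite_countable_subset[OF assms(1)] by blast
  define g :: "nat \<times> bool \<Rightarrow> 'a" where "g = (\<lambda>(d,b). f (2*d + (if b then 1 else 0)))"
  have g: "inj g"
  proof (rule injI)
    fix p q :: "nat \<times> bool" assume gpq: "g p = g q"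
    obtain d b where p: "p = (d,b)" by (cases p)
    obtain d' b' where q: "q = (d',b')" by (cases q)
    have "f (2*d + (if b then 1 else 0)) = f (2*d' + (if b' then 1 else 0))"
      using gpq by (simp add: g_def p q)
    then have e: "2*d + (if b then 1 else 0) = 2*d' + (if b' then (1::nat) else 0)"
      using f by (simp add: inj_eq)
    then have "b = b'" by (cases b; cases b'; simp; presburger)
    with e have "d = d'" by simp
    then show "p = q" using \<open>b = b'\<close> p q by simp
  qed
  have fun1: "strict_functor n X X (\<eta> X)" if "gaunt n X" for X
    using assms(2) that unfolding nat_endo_id_def by blast
  have natur: "F (\<eta> X x) = \<eta> Y (F x)" if "gaunt n X" "gaunt n Y" "strict_functor n X Y F" "x \<in> Cells X" for X Y F x
    using assms(2) that unfolding nat_endo_id_def by blast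
  have Q: "M \<le> n \<longrightarrow> (\<forall>X. gaunt n X \<longrightarrow> (\<forall>x\<in>Cells X. (M < n \<longrightarrow> src X M x = x) \<longrightarrow> \<eta> X x = x))" for M
  proof (induction M)
    case 0
    show ?case
    proof (intro impI allI ballI)
      fix X :: "'a ncat" and x assume Mn: "0 \<le> n" and X: "gaunt n X" and x: "x \<in> Cells X" and xM: "0 < n \<longrightarrow> src X 0 x = x"
      let ?G = "globe g 0" let ?e = "g (0,False)"
      have G: "gaunt n ?G" by (rule globe_gaunt[OF g])
      have XS: "strict_ncat n X" using X unfolding gaunt_def by blast
      have F: "strict_functor n ?G X (gfun g 0 X x)"
        by (rule gfun_functor[OF g XS x Mn]) (use xM in auto)
      have e: "?e \<in> Cells ?G" by (simp add: globe_def)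
      have "\<eta> ?G ?e \<in> Cells ?G" using fun1[OF G] e unfolding strict_functor_def by blast
      then have "\<eta> ?G ?e \<in> g ` {p. fst p < 0 \<or> (fst p = 0 \<and> \<not> snd p)}"
        by (simp add: globe_def)
      then have "\<eta> ?G ?e = ?e" by auto
      moreover have "gfun g 0 X x ?e = x" by (simp add: gfun_def inv_f_f[OF g])
      ultimately show "\<eta> X x = x" using natur[OF G X F e] by simp
    qed
  next
    case (Suc m)
    show ?case
    proof (intro impI allI ballI)
      fix X :: "'a ncat" and x assume Mn: "Suc m \<le> n" and X: "gaunt n X" and x: "x \<in> Cells X" and xM: "Suc m < n \<longrightarrow> src X (Suc m) x = x"
      let ?G = "globe g (Suc m)" let ?e = "g (Suc m,False)"
      let ?s = "g (m,False)" let ?t = "g (m,True)"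
      have G: "gaunt n ?G" by (rule globe_gaunt[OF g])
      have XS: "strict_ncat n X" using X unfolding gaunt_def by blast
      have F: "strict_functor n ?G X (gfun g (Suc m) X x)"
        by (rule gfun_functor[OF g XS x Mn]) (use xM in auto)
      have e: "?e \<in> Cells ?G" by (simp add: globe_def)
      have s: "?s \<in> Cells ?G" "?t \<in> Cells ?G" by (simp_all add: globe_def)
      have mn: "m < n" using Mn by simp
      have IH: "\<eta> ?G c = c" if "c \<in> Cells ?G" "src ?G m c = c" for c
      proof -
        have "\<forall>X. gaunt n X \<longrightarrow> (\<forall>x\<in>Cells X. (m < n \<longrightarrow> src X m x = x) \<longrightarrow> \<eta> X x = x)"
          using Suc.IH Mn by simp
        then show ?thesis using G that by blast
      qed
      have ss: "\<eta> ?G ?s = ?s" "\<eta> ?G ?t = ?t"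
        using IH[OF s(1)] IH[OF s(2)] by (simp_all add: globe_def inv_f_f[OF g])
      have se: "src ?G m ?e = ?s" "tgt ?G m ?e = ?t" by (simp_all add: globe_def inv_f_f[OF g])
      have FF: "strict_functor n ?G ?G (\<eta> ?G)" by (rule fun1[OF G])
      have "\<eta> ?G (src ?G m ?e) = src ?G m (\<eta> ?G ?e)" "\<eta> ?G (tgt ?G m ?e) = tgt ?G m (\<eta> ?G ?e)"
        using FF e mn unfolding strict_functor_def by blast+
      then have st: "src ?G m (\<eta> ?G ?e) = ?s" "tgt ?G m (\<eta> ?G ?e) = ?t" using se ss by simp_all
      have "\<eta> ?G ?e \<in> Cells ?G" using FF e unfolding strict_functor_def by blast
      then have "\<eta> ?G ?e \<in> g ` {p. fst p < Suc m \<or> (fst p = Suc m \<and> \<not> snd p)}"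
        by (simp add: globe_def)
      then obtain p where p: "\<eta> ?G ?e = g p" "fst p < Suc m \<or> (fst p = Suc m \<and> \<not> snd p)"
        by blast
      obtain d b where pdb: "p = (d,b)" by (cases p)
      have db: "\<eta> ?G ?e = g (d,b)" "d < Suc m \<or> (d = Suc m \<and> \<not> b)" using p pdb by simp_all
      have "\<eta> ?G ?e = ?e"
      proof (cases "d = Suc m")
        case True then show ?thesis using db by simp
      next
        case False
        then have "d \<le> m" using db by simp
        then have "src ?G m (\<eta> ?G ?e) = \<eta> ?G ?e" "tgt ?G m (\<eta> ?G ?e) = \<eta> ?G ?e"
          using db by (simp_all add: globe_def inv_f_f[OF g])
        then have "?s = ?t" using st by simp
        then show ?thesis using inj_eq[OF g] by simp
      qed
      moreover have "gfun g (Suc m) X x ?e = x" by (simp add: gfun_def inv_f_f[OF g])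
      ultimately show "\<eta> X x = x" using natur[OF G X F e] by simp
    qed
  qed
  show ?thesis
  proof (intro allI impI ballI)
    fix X :: "'a ncat" and x assume "gaunt n X" "x \<in> Cells X"
    then show "\<eta> X x = x" using Q[of n] by simp
  qed
qed

end
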